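(* Let $P,Q$ be distributions over pairs $x=(x_1,x_2)$ with $x_1\in\{1,\dots,r_1\}$ and $x_2\in\{1,\dots,r_2\}$, and assume $P(x_i=t)>0$ for all $i\in\{1,2\}$, $t\in\{1,\dots,r_i\}$. Let $\mathcal{F}=\{f_1(x_1)+f_2(x_2)\}$ where $f_i:\{1,\dots,r_i\}\to\mathbb{R}$ are arbitrary functions. Then $$\tau(P,Q,\mathcal{F})\le \frac{2}{\lambda_2(\bar K_P)}\max_{i\in\{1,2\},\,t\in\{1,\dots,r_i\}}\frac{Q(x_i=t)}{P(x_i=t)}$$ (interpreted as $+\infty$ if $\lambda_2(\bar K_P)=0$).
   Context: $\tau(P,Q,\mathcal{F})=\sup_{f,g\in\mathcal{F}}\mathbb{E}_Q[(f(x)-g(x))^2]/\mathbb{E}_P[(f(x)-g(x))^2]$ with the convention $0/0=0$. Identify $P$ with the $r_1\times r_2$ matrix $[P]_{a,b}=P(x_1=a,x_2=b)$; let $D_1=\mathrm{diag}(P(x_1=1),\dots,P(x_1=r_1))$ and $D_2=\mathrm{diag}(P(x_2=1),\dots,P(x_2=r_2))$ (row and column sums of $P$). The signless Laplacian of $P$ is the $(r_1+r_2)\times(r_1+r_2)$ matrix $$K_P=\begin{pmatrix}D_1 & P\\ P^\top & D_2\end{pmatrix},$$ and the normalized signless Laplacian is $\bar K_P=\mathrm{diag}(K_P)^{-1/2}K_P\,\mathrm{diag}(K_P)^{-1/2}$, where $\mathrm{diag}(K_P)$ is $K_P$ with all off-diagonal entries set to zero. For a symmetric matrix $M$, $\lambda_1(M)\le\lambda_2(M)\le\cdots$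 are its eigenvalues in ascending order. *)

theory Defs
  imports "Jordan_Normal_Form.Char_Poly" "HOL-Library.Extended_Real"
begin

text \<open>Distributions over pairs (x1,x2) with x1 in {0..<r1}, x2 in {0..<r2}
 (0-based indices), given as probability mass functions.\<close>
definition is_pair_dist :: "nat \<Rightarrow> nat \<Rightarrow> (nat \<Rightarrow> nat \<Rightarrow> real) \<Rightarrow> bool" where
  "is_pair_dist r1 r2 P \<longleftrightarrow>
     (\<forall>a<r1. \<forall>b<r2. 0 \<le> P a b) \<and> (\<Sum>a<r1. \<Sum>b<r2. P a b) = 1"

definition expect :: "nat \<Rightarrow> nat \<Rightarrow> (nat \<Rightarrow> nat \<Rightarrow> real) \<Rightarrow> (nat \<Rightarrow> nat \<Rightarrow> real) \<Rightarrow> real" where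
  "expect r1 r2 P h = (\<Sum>a<r1. \<Sum>b<r2. P a b * h a b)"

definition marg1 :: "nat \<Rightarrow> (nat \<Rightarrow> nat \<Rightarrow> real) \<Rightarrow> nat \<Rightarrow> real" where
  "marg1 r2 P a = (\<Sum>b<r2. P a b)"

definition marg2 :: "nat \<Rightarrow> (nat \<Rightarrow> nat \<Rightarrow> real) \<Rightarrow> nat \<Rightarrow> real" where
  "marg2 r1 P b = (\<Sum>a<r1. P a b)"

definition additive_class :: "(nat \<Rightarrow> nat \<Rightarrow> real) set" where
  "additive_class = {h. \<exists>f1 f2 :: nat \<Rightarrow> real. h = (\<lambda>a b. f1 a + f2 b)}"

definition eratio :: "real \<Rightarrow> real \<Rightarrow> ereal" where
  "eratio q p = (if p = 0 then (if q = 0 then 0 else \<infinity>) else ereal (q / p))"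

definition tau :: "nat \<Rightarrow> nat \<Rightarrow> (nat \<Rightarrow> nat \<Rightarrow> real) \<Rightarrow> (nat \<Rightarrow> nat \<Rightarrow> real)
                     \<Rightarrow> (nat \<Rightarrow> nat \<Rightarrow> real) set \<Rightarrow> ereal" where
  "tau r1 r2 P Q F = (SUP fg \<in> F \<times> F.
      eratio (expect r1 r2 Q (\<lambda>a b. (fst fg a b - snd fg a b)^2))
             (expect r1 r2 P (\<lambda>a b. (fst fg a b - snd fg a b)^2)))"

definition pair_mat :: "nat \<Rightarrow> nat \<Rightarrow> (nat \<Rightarrow> nat \<Rightarrow> real) \<Rightarrow> real mat" where
  "pair_mat r1 r2 P = mat r1 r2 (\<lambda>(a, b). P a b)"

definition signless_laplacian :: "nat \<Rightarrow> nat \<Rightarrow> (nat \<Rightarrow> nat \<Rightarrow> real) \<Rightarrow> real mat" where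
  "signless_laplacian r1 r2 P =
     four_block_mat (mat_diag r1 (marg1 r2 P)) (pair_mat r1 r2 P)
                    (transpose_mat (pair_mat r1 r2 P)) (mat_diag r2 (marg2 r1 P))"

definition normalized :: "real mat \<Rightarrow> real mat" where
  "normalized K = (let Dh = mat_diag (dim_row K) (\<lambda>i. 1 / sqrt (K $$ (i, i))) in Dh * K * Dh)"

text \<open>Eigenvalues (roots of the characteristic polynomial, with multiplicity) in ascending
 order; lambda_k is the k-th one (1-based).\<close>
definition eigs_asc :: "real mat \<Rightarrow> real list" where
  "eigs_asc A = sorted_list_of_multiset (proots (char_poly A))"

definition eig_lambda :: "nat \<Rightarrow> real mat \<Rightarrow> real" where
  "eig_lambda k A = eigs_asc A ! (k - 1)"

end

theory Submission
  imports Defs "Jordan_Normal_Form.Schur_Decomposition"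
begin


lemma herm_real:
  fixes A :: "real mat"
  assumes A: "A \<in> carrier_mat n n" and sym: "\<And>i j. i<n \<Longrightarrow> j<n \<Longrightarrow> A$$(i,j) = A$$(j,i)"
   and ev: "eigenvector (map_mat complex_of_real A) v a"
  shows "a = complex_of_real (Re a)"
proof -
  let ?M = "map_mat complex_of_real A"
  from ev have v: "v \<in> carrier_vec n" "v \<noteq> 0\<^sub>v n" "?M *\<^sub>v v = a \<cdot>\<^sub>v v"
    unfolding eigenvector_def using A by auto
  define N where "N = (\<Sum>i<n. cnj (v$i) * v$i)"
  define s where "s = (\<Sum>i<n. \<Sum>j<n. cnj (v$i) * (of_real (A$$(i,j)) * v$j))"
  have Mv: "(?M *\<^sub>v v)$i = (\<Sum>j<n. of_real (A$$(i,j)) * v$j)" if "i<n" for i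
    using A v(1) that by (auto simp: scalar_prod_def lessThan_atLeast0 intro!: sum.cong)
  have "s = (\<Sum>i<n. cnj (v$i) * (?M *\<^sub>v v)$i)"
    unfolding s_def by (auto simp: Mv sum_distrib_left)
  also have "\<dots> = a * N" unfolding v(3) N_def using v
    by (auto simp: sum_distrib_left intro!: sum.cong)
  finally have sN: "s = a * N" .
  have "cnj s = (\<Sum>i<n. \<Sum>j<n. v$i * (of_real (A$$(i,j)) * cnj (v$j)))"
    unfolding s_def by simp
  also have "\<dots> = (\<Sum>j<n. \<Sum>i<n. v$i * (of_real (A$$(i,j)) * cnj (v$j)))"
    by (rule sum.swap)
  also have "\<dots> = s" unfolding s_def
    by (intro sum.cong refl, subst sym, auto simp: ac_simps)
  finally have cs: "cnj s = s" .
  have Nr: "N = of_real (\<Sum>i<n. (cmod (v$i))^2)"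
    unfolding N_def of_real_sum by (intro sum.cong refl) (simp add: complex_norm_square[symmetric] mult.commute)
  have "N \<noteq> 0"
  proof
    assume "N = 0"
    hence "(\<Sum>i<n. (cmod (v$i))^2) = 0" unfolding Nr of_real_eq_0_iff .
    hence "\<forall>i\<in>{..<n}. (cmod (v$i))^2 = 0"
      by (subst sum_nonneg_eq_0_iff[symmetric], auto)
    hence "v = 0\<^sub>v n" using v(1) by (intro eq_vecI, auto)
    with v(2) show False by simp
  qed
  have cN: "cnj N = N" unfolding Nr by simp
  have "a = s / N" using sN \<open>N \<noteq> 0\<close> by simp
  hence "cnj a = a" using cs cN by simp
  thus ?thesis by (simp add: complex_eq_iff)
qed

interpretation ofr: map_poly_inj_idom_hom "of_real :: real \<Rightarrow> complex" ..

lemma real_split: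
  fixes A :: "real mat"
  assumes A: "A \<in> carrier_mat n n" and sym: "\<And>i j. i<n \<Longrightarrow> j<n \<Longrightarrow> A$$(i,j) = A$$(j,i)"
  shows "\<exists>es. char_poly A = (\<Prod>e\<leftarrow>es. [:-e,1:])"
proof -
  let ?M = "map_mat complex_of_real A"
  have M: "?M \<in> carrier_mat n n" using A by auto
  from char_poly_factorized[OF M] obtain as where cM: "char_poly ?M = (\<Prod>a\<leftarrow>as. [:-a,1:])" by auto
  have re: "a = complex_of_real (Re a)" if a: "a \<in> set as" for a
  proof -
    have "poly (char_poly ?M) a = 0" unfolding cM using a by (rule linear_poly_root)
    hence "eigenvalue ?M a" using eigenvalue_root_char_poly[OF M] by simp
    then obtain v where "eigenvector ?M v a" unfolding eigenvalue_def by auto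
    from herm_real[OF A sym this] show ?thesis by auto
  qed
  have "map_poly complex_of_real (\<Prod>e\<leftarrow>map Re as. [:-e,1:]) = (\<Prod>a\<leftarrow>as. [:-a,1:])"
    using re
  proof (induct as)
    case (Cons a as)
    hence "a = complex_of_real (Re a)" by auto
    hence "[:- a, 1:] = map_poly complex_of_real [:-Re a,1:]"
      by (simp add: of_real_hom.map_poly_pCons_hom)
    with Cons show ?case unfolding list.map prod_list.Cons ofr.hom_mult by simp
  qed simp
  also have "\<dots> = map_poly complex_of_real (char_poly A)"
    using cM of_real_hom.char_poly_hom[OF A] by metis
  finally show ?thesis unfolding ofr.eq_iff by (intro exI[of _ "map Re as"], simp)
qed

lemma conj_real_vec[simp]: "conjugate (u :: real vec) = u"
  by (intro eq_vecI, auto)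

lemma real_sprod_self_nonneg: "(u :: real vec) \<bullet> u \<ge> 0"
  unfolding scalar_prod_def by (intro sum_nonneg, auto)

lemma blockdiag_mult:
  assumes "A1 \<in> carrier_mat a a" "D1 \<in> carrier_mat b b" "A2 \<in> carrier_mat a a" "D2 \<in> carrier_mat b b"
  shows "four_block_mat A1 (0\<^sub>m a b) (0\<^sub>m b a) D1 * four_block_mat A2 (0\<^sub>m a b) (0\<^sub>m b a) D2
    = four_block_mat (A1 * A2) (0\<^sub>m a b) (0\<^sub>m b a) (D1 * D2 :: 'x :: comm_ring_1 mat)"
  by (subst mult_four_block_mat[OF assms(1) zero_carrier_mat zero_carrier_mat assms(2) 
     assms(3) zero_carrier_mat zero_carrier_mat assms(4)], insert assms, simp)

lemma blockdiag_transpose: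
  assumes "A1 \<in> carrier_mat a a" "D1 \<in> carrier_mat b b"
  shows "(four_block_mat A1 (0\<^sub>m a b) (0\<^sub>m b a) D1)\<^sup>T = four_block_mat A1\<^sup>T (0\<^sub>m a b) (0\<^sub>m b a) D1\<^sup>T"
  by (subst transpose_four_block_mat[OF assms(1) zero_carrier_mat zero_carrier_mat assms(2)], simp)

lemma spectral:
  fixes A :: "real mat"
  assumes "A \<in> carrier_mat n n" "A\<^sup>T = A" "char_poly A = (\<Prod>e\<leftarrow>es. [:-e,1:])"
  shows "\<exists>U. U \<in> carrier_mat n n \<and> U\<^sup>T * U = 1\<^sub>m n \<and> U * U\<^sup>T = 1\<^sub>m n
     \<and> A = U * mat_diag n (\<lambda>i. es!i) * U\<^sup>T"
  using assms
proof (induct n arbitrary: A es)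
  case 0
  show ?case by (intro exI[of _ "1\<^sub>m 0"], insert 0, auto intro!: eq_matI)
next
  case (Suc m A es)
  define n where "n = Suc m"
  have A: "A \<in> carrier_mat n n" and symA: "A\<^sup>T = A" and cA: "char_poly A = (\<Prod>e\<leftarrow>es. [:-e,1:])"
    using Suc(2-4) unfolding n_def by auto
  have "length es = n" using degree_monic_char_poly[OF A] degree_linear_factors[of uminus es] cA by simp
  then obtain e es' where es: "es = e # es'" and les': "length es' = m" unfolding n_def by (cases es, auto)
  have ev: "eigenvalue A e" unfolding eigenvalue_root_char_poly[OF A] cA es by (rule linear_poly_root, simp)
  define v where "v = find_eigenvector A e"
  from find_eigenvector[OF A ev] have "eigenvector A v e" unfolding v_def .
  hence v: "v \<in> carrier_vec n" and v0: "v \<noteq> 0\<^sub>v n" and Av: "A *\<^sub>v v = e \<cdot>\<^sub>v v"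
    unfolding eigenvector_def using A by auto
  interpret cof_vec_space n "TYPE(real)" .
  from basis_completion[OF v v0]
  have bspan: "span (set (basis_completion v)) = carrier_vec n" and bdist: "distinct (basis_completion v)"
    and bind: "\<not> lin_dep (set (basis_completion v))" and bcar: "set (basis_completion v) \<subseteq> carrier_vec n"
    and bhd: "hd (basis_completion v) = v" and blen: "length (basis_completion v) = n" by auto
  define ws where "ws = gram_schmidt n (basis_completion v)"
  from gram_schmidt_result[OF bcar bdist bind ws_def]
  have wsc: "set ws \<subseteq> carrier_vec n" and wso: "corthogonal ws" and wsl: "length ws = n"
    using blen by auto
  from bhd blen obtain vs where bv: "basis_completion v = v # vs" unfolding n_def by (cases "basis_completion v", auto)
  have ws0: "ws ! 0 = v" using gram_schmidt_hd[OF v, of vs] bv wsl unfolding ws_def n_def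
    by (metis hd_conv_nth length_0_conv nat.simps(3))
  have wsi: "ws ! i \<in> carrier_vec n" if "i < n" for i using wsc wsl that by auto
  have orth: "ws ! i \<bullet> ws ! j = 0 \<longleftrightarrow> i \<noteq> j" if "i < n" "j < n" for i j
    using corthogonalD[OF wso, of i j] that wsl by simp
  define nr where "nr i = sqrt (ws ! i \<bullet> ws ! i)" for i
  have nrpos: "nr i > 0" if "i < n" for i
    using orth[OF that that] real_sprod_self_nonneg[of "ws ! i"] unfolding nr_def by auto
  define W where "W = mat n n (\<lambda>(i,j). (ws ! j) $ i / nr j)"
  have W: "W \<in> carrier_mat n n" unfolding W_def by auto
  have WTW: "W\<^sup>T * W = 1\<^sub>m n"
  proof (rule eq_matI)
    fix i j assume i: "i < dim_row (1\<^sub>m n :: real mat)" and j: "j < dim_col (1\<^sub>m n :: real mat)"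
    hence i: "i < n" and j: "j < n" by auto
    have "(W\<^sup>T * W) $$ (i,j) = (\<Sum>k<n. W $$ (k,i) * W $$ (k,j))"
      using i j W by (simp add: scalar_prod_def lessThan_atLeast0)
    also have "\<dots> = (ws ! i \<bullet> ws ! j) / (nr i * nr j)"
      using i j wsi[OF i] wsi[OF j] unfolding W_def
      by (simp add: scalar_prod_def lessThan_atLeast0 sum_divide_distrib)
    also have "\<dots> = 1\<^sub>m n $$ (i,j)"
    proof (cases "i = j")
      case True
      have "ws ! i \<bullet> ws ! i = nr i * nr i" unfolding nr_def
        using real_sprod_self_nonneg[of "ws ! i"] by simp
      thus ?thesis using True i nrpos[OF i] by simp
    next
      case False thus ?thesis using orth[OF i j] i j by simp
    qed
    finally show "(W\<^sup>T * W) $$ (i,j) = 1\<^sub>m n $$ (i,j)" .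
  qed (insert W, auto)
  have WWT: "W * W\<^sup>T = 1\<^sub>m n" by (rule mat_mult_left_right_inverse[OF _ W WTW], insert W, auto)
  have colW0: "col W 0 = (1 / nr 0) \<cdot>\<^sub>v v"
    using v ws0 unfolding W_def n_def by (intro eq_vecI, auto)
  define A' where "A' = W\<^sup>T * A * W"
  have A': "A' \<in> carrier_mat n n" unfolding A'_def using A W by auto
  have symA': "A'\<^sup>T = A'"
  proof -
    have "A'\<^sup>T = W\<^sup>T * (W\<^sup>T * A)\<^sup>T" unfolding A'_def
      by (rule transpose_mult[of _ n n], insert A W, auto)
    also have "(W\<^sup>T * A)\<^sup>T = A\<^sup>T * W" 
      by (subst transpose_mult[of _ n n], insert A W, auto)
    finally show ?thesis unfolding A'_def symA using A W by (simp add: assoc_mult_mat[of _ n n _ n _ n])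
  qed
  have A'0: "A' $$ (i,0) = (if i = 0 then e else 0)" if i: "i < n" for i
  proof -
    have "col (A * W) 0 = A *\<^sub>v col W 0"
      by (rule col_mult2[OF A W], unfold n_def, simp)
    also have "\<dots> = (1 / nr 0) \<cdot>\<^sub>v (A *\<^sub>v v)" unfolding colW0 using A v by (simp add: mult_mat_vec)
    also have "\<dots> = e \<cdot>\<^sub>v col W 0" unfolding Av colW0 by (simp add: smult_smult_assoc mult.commute)
    finally have "col (A * W) 0 = e \<cdot>\<^sub>v col W 0" .
    hence "A' $$ (i,0) = row W\<^sup>T i \<bullet> (e \<cdot>\<^sub>v col W 0)" unfolding A'_def
      using A W i unfolding n_def by (simp add: assoc_mult_mat[of _ "Suc m" "Suc m" _ "Suc m" _ "Suc m"])
    also have "\<dots> = e * (W\<^sup>T * W) $$ (i,0)" using W i unfolding n_def by simp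
    finally show ?thesis unfolding WTW using i unfolding n_def by simp
  qed
  define A3 where "A3 = mat m m (\<lambda>(i,j). A' $$ (Suc i, Suc j))"
  have A3: "A3 \<in> carrier_mat m m" unfolding A3_def by auto
  have A'sym: "A' $$ (i,j) = A' $$ (j,i)" if "i < n" "j < n" for i j
    using arg_cong[OF symA', of "\<lambda>M. M $$ (i,j)"] that A' by simp
  have A'block: "A' = four_block_mat (mat 1 1 (\<lambda>_. e)) (0\<^sub>m 1 m) (0\<^sub>m m 1) A3"
  proof (rule eq_matI)
    fix i j assume "i < dim_row (four_block_mat (mat 1 1 (\<lambda>_. e)) (0\<^sub>m 1 m) (0\<^sub>m m 1) A3)"
      "j < dim_col (four_block_mat (mat 1 1 (\<lambda>_. e)) (0\<^sub>m 1 m) (0\<^sub>m m 1) A3)"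
    hence i: "i < n" and j: "j < n" using A3 unfolding n_def by auto
    show "A' $$ (i,j) = four_block_mat (mat 1 1 (\<lambda>_. e)) (0\<^sub>m 1 m) (0\<^sub>m m 1) A3 $$ (i,j)"
      using i j A3 A'0[OF i] A'0[OF j] A'sym[OF i j] unfolding A3_def n_def
      by (cases i; cases j; auto)
  qed (insert A' A3, auto simp: n_def)
  have "similar_mat A' A"
    unfolding similar_mat_def similar_mat_wit_def Let_def
    by (intro exI[of _ "W\<^sup>T"] exI[of _ W], insert A' A W WTW WWT, auto simp: A'_def)
  from char_poly_similar[OF this] have "char_poly A' = char_poly A" .
  also have "char_poly A' = char_poly (mat 1 1 (\<lambda>_. e)) * char_poly A3"
    unfolding A'block by (rule char_poly_four_block_zeros_col[OF _ _ A3], auto)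
  also have "char_poly (mat 1 1 (\<lambda>_. e)) = [: -e,1 :]"
    by (simp add: char_poly_defs det_def sign_def)
  finally have cA3: "char_poly A3 = (\<Prod>e\<leftarrow>es'. [:-e,1:])" unfolding cA es
    by (metis mult_cancel_left pCons_eq_0_iff zero_neq_one prod_list.Cons list.map)
  have symA3: "A3\<^sup>T = A3" using A3 A'sym unfolding A3_def n_def by (intro eq_matI, auto)
  from Suc(1)[OF A3 symA3 cA3] obtain U3 where U3: "U3 \<in> carrier_mat m m" and U3TU3: "U3\<^sup>T * U3 = 1\<^sub>m m"
    and U3U3T: "U3 * U3\<^sup>T = 1\<^sub>m m" and A3U: "A3 = U3 * mat_diag m (\<lambda>i. es'!i) * U3\<^sup>T" by auto
  define X where "X = four_block_mat (1\<^sub>m 1) (0\<^sub>m 1 m) (0\<^sub>m m 1) U3"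
  have X: "X \<in> carrier_mat n n" unfolding X_def n_def using U3 by auto
  have XT: "X\<^sup>T = four_block_mat (1\<^sub>m 1) (0\<^sub>m 1 m) (0\<^sub>m m 1) U3\<^sup>T"
    unfolding X_def using U3 by (simp add: blockdiag_transpose)
  have XTX: "X\<^sup>T * X = 1\<^sub>m n" unfolding XT unfolding X_def n_def using U3 U3TU3
    by (subst blockdiag_mult, auto simp: four_block_one_mat[of 1 m, simplified])
  have XXT: "X * X\<^sup>T = 1\<^sub>m n" unfolding XT unfolding X_def n_def using U3 U3U3T
    by (subst blockdiag_mult, auto simp: four_block_one_mat[of 1 m, simplified])
  define D where "D = mat_diag n (\<lambda>i. es!i)"
  have D: "D \<in> carrier_mat n n" unfolding D_def by auto
  have Dblock: "D = four_block_mat (mat 1 1 (\<lambda>_. e)) (0\<^sub>m 1 m) (0\<^sub>m m 1) (mat_diag m (\<lambda>i. es'!i))"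
    unfolding D_def n_def es by (intro eq_matI, auto simp: mat_diag_def)
  have XDXT: "X * D * X\<^sup>T = A'" unfolding Dblock XT unfolding X_def A'block A3U using U3
    by (subst blockdiag_mult, auto, subst blockdiag_mult, auto)
  have cars: "W\<^sup>T \<in> carrier_mat n n" "X\<^sup>T \<in> carrier_mat n n" using W X by auto
  note simps = assoc_mult_mat[of _ n n _ n _ n] W X A A' D cars mult_carrier_mat[of _ n n _ n]
  show ?case
  proof (intro exI[of _ "W * X"] conjI)
    show "W * X \<in> carrier_mat (Suc m) (Suc m)" using W X unfolding n_def by auto
    have T: "(W * X)\<^sup>T = X\<^sup>T * W\<^sup>T" by (rule transpose_mult[of _ n n], insert W X, auto)
    have "(W * X)\<^sup>T * (W * X) = X\<^sup>T * (W\<^sup>T * W) * X" unfolding T by (simp add: simps)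
    also have "\<dots> = 1\<^sub>m n" unfolding WTW using X XTX by simp
    finally show "(W * X)\<^sup>T * (W * X) = 1\<^sub>m (Suc m)" unfolding n_def .
    have "(W * X) * (W * X)\<^sup>T = W * (X * X\<^sup>T) * W\<^sup>T" unfolding T by (simp add: simps)
    also have "\<dots> = 1\<^sub>m n" unfolding XXT using W WWT by simp
    finally show "(W * X) * (W * X)\<^sup>T = 1\<^sub>m (Suc m)" unfolding n_def .
    have "W * X * D * (W * X)\<^sup>T = W * (X * D * X\<^sup>T) * W\<^sup>T" unfolding T by (simp add: simps)
    also have "\<dots> = (W * W\<^sup>T) * A * (W * W\<^sup>T)" unfolding XDXT A'_def by (simp add: simps)
    also have "\<dots> = A" unfolding WWT using A by simp
    finally show "A = W * X * mat_diag (Suc m) (\<lambda>i. es!i) * (W * X)\<^sup>T" unfolding D_def n_def by simp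
  qed
qed

lemma eigs_asc_spectral:
  fixes A :: "real mat"
  assumes A: "A \<in> carrier_mat n n" and symA: "A\<^sup>T = A"
  shows "length (eigs_asc A) = n \<and> sorted (eigs_asc A) \<and> (\<exists>U. U \<in> carrier_mat n n \<and> U\<^sup>T * U = 1\<^sub>m n \<and> U * U\<^sup>T = 1\<^sub>m n
     \<and> A = U * mat_diag n (\<lambda>i. eigs_asc A ! i) * U\<^sup>T)"
proof -
  have sym: "A$$(i,j) = A$$(j,i)" if "i<n" "j<n" for i j
    using arg_cong[OF symA, of "\<lambda>M. M $$ (i,j)"] that A by simp
  from real_split[OF A sym] obtain xs where cA: "char_poly A = (\<Prod>e\<leftarrow>xs. [:-e,1:])" by auto
  have "proots (\<Prod>e\<leftarrow>xs. [:-e,1:]) = mset xs"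
  proof (induct xs)
    case (Cons x xs)
    have "proots ([:-x,1:] * (\<Prod>e\<leftarrow>xs. [:-e,1:])) = proots [:-x,1:] + proots (\<Prod>e\<leftarrow>xs. [:-e,1:])"
      by (rule proots_mult, auto)
    thus ?case using Cons by (simp add: proots_linear_factor)
  qed simp
  hence eq: "eigs_asc A = sort xs" unfolding eigs_asc_def cA by simp
  have "(\<Prod>e\<leftarrow>sort xs. [:-e,1:]) = prod_mset (image_mset (\<lambda>e. [:-e,1:]) (mset (sort xs)))"
    by (subst prod_mset_prod_list[symmetric], simp)
  also have "\<dots> = prod_mset (image_mset (\<lambda>e. [:-e,1:]) (mset xs))" by simp
  also have "\<dots> = (\<Prod>e\<leftarrow>xs. [:-e,1:])"
    by (subst prod_mset_prod_list[symmetric], simp)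
  finally have "(\<Prod>e\<leftarrow>sort xs. [:-e,1:]) = (\<Prod>e\<leftarrow>xs. [:-e,1:])" .
  hence cA': "char_poly A = (\<Prod>e\<leftarrow>eigs_asc A. [:-e,1:])" unfolding eq cA by simp
  have "length (eigs_asc A) = n" using degree_monic_char_poly[OF A] degree_linear_factors[of uminus "eigs_asc A"] cA' by simp
  moreover have "sorted (eigs_asc A)" unfolding eq by simp
  ultimately show ?thesis using spectral[OF A symA cA'] by blast
qed



lemma if_mult_zero_left: "(if P then a else 0) * (b::real) = (if P then a*b else 0)" by simp
lemma if_mult_zero_right: "(b::real) * (if P then a else 0) = (if P then b*a else 0)" by simp

lemma diag_left: "(M :: real mat) \<in> carrier_mat n m \<Longrightarrow> mat_diag n f * M = mat n m (\<lambda>(i,j). f i * M$$(i,j))"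
  by (intro eq_matI, auto simp: mat_diag_def scalar_prod_def if_mult_zero_left if_mult_zero_right sum.delta sum.delta')

lemma diag_right: "(M :: real mat) \<in> carrier_mat n m \<Longrightarrow> M * mat_diag m f = mat n m (\<lambda>(i,j). M$$(i,j) * f j)"
  by (intro eq_matI, auto simp: mat_diag_def scalar_prod_def if_mult_zero_left if_mult_zero_right sum.delta sum.delta')

lemma normalized_entry:
  assumes K: "(K :: real mat) \<in> carrier_mat n n" and i: "i < n" and j: "j < n"
  shows "normalized K $$ (i,j) = K$$(i,j) / (sqrt (K$$(i,i)) * sqrt (K$$(j,j)))"
  using K i j unfolding normalized_def Let_def
  by (simp add: diag_left[OF K] diag_right[of _ n n])

lemma normalized_carrier: "(K :: real mat) \<in> carrier_mat n n \<Longrightarrow> normalized K \<in> carrier_mat n n"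
  unfolding normalized_def Let_def by (auto simp: mat_diag_def)

lemma K_carrier: "signless_laplacian r1 r2 P \<in> carrier_mat (r1+r2) (r1+r2)"
  unfolding signless_laplacian_def pair_mat_def by auto

lemma K_entry:
  assumes "i < r1 + r2" "j < r1 + r2"
  shows "signless_laplacian r1 r2 P $$ (i,j) = (if i<r1 then (if j<r1 then (if i=j then marg1 r2 P i else 0)
     else P i (j-r1)) else (if j<r1 then P j (i-r1) else (if i=j then marg2 r1 P (i-r1) else 0)))"
  using assms unfolding signless_laplacian_def pair_mat_def by (simp add: mat_diag_def; arith)

lemma sum_split_add: "(\<Sum>i<(r1::nat)+r2. f i) = (\<Sum>i<r1. f i) + (\<Sum>b<r2. f (r1+b))"
  by (induct r2) (auto simp: add.assoc)

lemma sprod_mat_vec: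
  assumes M: "M \<in> carrier_mat n k" and y: "y \<in> carrier_vec n" and z: "z \<in> carrier_vec k"
  shows "y \<bullet> (M *\<^sub>v z) = (M\<^sup>T *\<^sub>v y) \<bullet> (z :: real vec)"
proof -
  have "y \<bullet> (M *\<^sub>v z) = (\<Sum>i<n. \<Sum>j<k. y$i * M$$(i,j) * z$j)"
    using M y z by (simp add: scalar_prod_def lessThan_atLeast0 sum_distrib_left mult.assoc)
  also have "\<dots> = (\<Sum>j<k. \<Sum>i<n. y$i * M$$(i,j) * z$j)" by (rule sum.swap)
  also have "\<dots> = (M\<^sup>T *\<^sub>v y) \<bullet> z"
    using M y z by (simp add: scalar_prod_def lessThan_atLeast0 sum_distrib_left ac_simps)
  finally show ?thesis .
qed


definition dd :: "nat \<Rightarrow> nat \<Rightarrow> (nat \<Rightarrow> nat \<Rightarrow> real) \<Rightarrow> nat \<Rightarrow> real" where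
  "dd r1 r2 P i = (if i < r1 then marg1 r2 P i else marg2 r1 P (i - r1))"

definition wv :: "nat \<Rightarrow> (nat \<Rightarrow> real) \<Rightarrow> (nat \<Rightarrow> real) \<Rightarrow> nat \<Rightarrow> real" where
  "wv r1 u v i = (if i < r1 then u i else v (i - r1))"

definition yv :: "nat \<Rightarrow> nat \<Rightarrow> (nat \<Rightarrow> nat \<Rightarrow> real) \<Rightarrow> (nat \<Rightarrow> real) \<Rightarrow> (nat \<Rightarrow> real) \<Rightarrow> real vec" where
  "yv r1 r2 P u v = vec (r1+r2) (\<lambda>i. sqrt (dd r1 r2 P i) * wv r1 u v i)"

lemma K_diag: "i < r1 + r2 \<Longrightarrow> signless_laplacian r1 r2 P $$ (i,i) = dd r1 r2 P i"
  by (simp add: K_entry dd_def)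

lemma dd_pos: assumes "\<forall>t<r1. marg1 r2 P t > 0" "\<forall>t<r2. marg2 r1 P t > 0" "i < r1 + r2"
  shows "dd r1 r2 P i > 0" using assms unfolding dd_def by auto

lemma QF_lemma:
  fixes P :: "nat \<Rightarrow> nat \<Rightarrow> real"
  assumes pos: "\<forall>t<r1. marg1 r2 P t > 0" "\<forall>t<r2. marg2 r1 P t > 0"
  shows "yv r1 r2 P u v \<bullet> (normalized (signless_laplacian r1 r2 P) *\<^sub>v yv r1 r2 P u v)
    = (\<Sum>a<r1. \<Sum>b<r2. P a b * (u a + v b)^2)"
proof -
  define n where "n = r1 + r2"
  define K where "K = signless_laplacian r1 r2 P"
  define A where "A = normalized K"
  define y where "y = yv r1 r2 P u v"
  define w where "w = wv r1 u v"
  have K: "K \<in> carrier_mat n n" unfolding K_def n_def by (rule K_carrier)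
  have A: "A \<in> carrier_mat n n" unfolding A_def using K by (rule normalized_carrier)
  have y: "y \<in> carrier_vec n" unfolding y_def yv_def n_def by simp
  have sq: "sqrt (dd r1 r2 P i) > 0" if "i < n" for i using dd_pos[OF pos, of i] that unfolding n_def by simp
  have Aij: "A $$ (i,j) = K $$ (i,j) / (sqrt (dd r1 r2 P i) * sqrt (dd r1 r2 P j))" if "i<n" "j<n" for i j
    unfolding A_def using normalized_entry[OF K that] K_diag[of _ r1 r2 P] that unfolding K_def n_def by simp
  have "y \<bullet> (A *\<^sub>v y) = (\<Sum>i<n. y $ i * (\<Sum>j<n. A $$ (i,j) * y $ j))"
    using A y by (simp add: scalar_prod_def lessThan_atLeast0)
  also have "\<dots> = (\<Sum>i<n. \<Sum>j<n. w i * K $$ (i,j) * w j)"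
  proof (intro sum.cong refl, unfold sum_distrib_left, intro sum.cong refl)
    fix i j assume i: "i \<in> {..<n}" and j: "j \<in> {..<n}"
    have "y $ i = sqrt (dd r1 r2 P i) * w i" "y $ j = sqrt (dd r1 r2 P j) * w j"
      using i j unfolding y_def yv_def w_def n_def by auto
    thus "y $ i * (A $$ (i,j) * y $ j) = w i * K $$ (i,j) * w j"
      unfolding Aij[OF i[simplified] j[simplified]] using sq[of i] sq[of j] i j by (simp add: field_simps)
  qed
  also have "\<dots> = (\<Sum>a<r1. (\<Sum>a'<r1. w a * K $$ (a,a') * w a') + (\<Sum>b<r2. w a * K $$ (a, r1+b) * w (r1+b)))
     + (\<Sum>b<r2. (\<Sum>a'<r1. w (r1+b) * K $$ (r1+b,a') * w a') + (\<Sum>b'<r2. w (r1+b) * K $$ (r1+b, r1+b') * w (r1+b')))"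
    unfolding n_def sum_split_add ..
  also have "\<dots> = (\<Sum>a<r1. u a * marg1 r2 P a * u a + (\<Sum>b<r2. u a * P a b * v b))
     + (\<Sum>b<r2. (\<Sum>a<r1. v b * P a b * u a) + v b * marg2 r1 P b * v b)"
  proof -
    have k1: "K $$ (a,a') = (if a = a' then marg1 r2 P a else 0)" if "a < r1" "a' < r1" for a a'
      unfolding K_def using that by (subst K_entry, auto)
    have k2: "K $$ (a,r1+b) = P a b" if "a < r1" "b < r2" for a b
      unfolding K_def using that by (subst K_entry, auto)
    have k3: "K $$ (r1+b,a) = P a b" if "a < r1" "b < r2" for a b
      unfolding K_def using that by (subst K_entry, auto)
    have k4: "K $$ (r1+b,r1+b') = (if b = b' then marg2 r1 P b else 0)" if "b < r2" "b' < r2" for b b'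
      unfolding K_def using that by (subst K_entry, auto)
    have wa: "w a = u a" if "a < r1" for a using that unfolding w_def wv_def by simp
    have wb: "w (r1+b) = v b" for b unfolding w_def wv_def by simp
    have s1: "(\<Sum>a'<r1. w a * K $$ (a,a') * w a') = u a * marg1 r2 P a * u a" if "a < r1" for a
    proof -
      have "(\<Sum>a'<r1. w a * K $$ (a,a') * w a') = (\<Sum>a'<r1. if a = a' then u a * marg1 r2 P a * u a else 0)"
        by (intro sum.cong refl, insert that, auto simp: k1 wa)
      also have "\<dots> = u a * marg1 r2 P a * u a" using that by simp
      finally show ?thesis .
    qed
    have s4: "(\<Sum>b'<r2. w (r1+b) * K $$ (r1+b,r1+b') * w (r1+b')) = v b * marg2 r1 P b * v b" if "b < r2" for b
    proof -
      have "(\<Sum>b'<r2. w (r1+b) * K $$ (r1+b,r1+b') * w (r1+b')) = (\<Sum>b'<r2. if b = b' then v b * marg2 r1 P b * v b else 0)"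
        by (intro sum.cong refl, insert that, auto simp: k4 wb)
      also have "\<dots> = v b * marg2 r1 P b * v b" using that by simp
      finally show ?thesis .
    qed
    have s2: "(\<Sum>b<r2. w a * K $$ (a, r1+b) * w (r1+b)) = (\<Sum>b<r2. u a * P a b * v b)" if "a < r1" for a
      by (intro sum.cong refl, insert that, auto simp: k2 wa wb)
    have s3: "(\<Sum>a'<r1. w (r1+b) * K $$ (r1+b,a') * w a') = (\<Sum>a<r1. v b * P a b * u a)" if "b < r2" for b
      by (intro sum.cong refl, insert that, auto simp: k3 wa wb)
    show ?thesis
      by (intro arg_cong2[where f = "(+)"] sum.cong refl; simp add: s1 s2 s3 s4; simp add: k2 k3 wa wb)
  qed
  also have "\<dots> = (\<Sum>a<r1. \<Sum>b<r2. P a b * (u a + v b)^2)"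
  proof -
    have e1: "(\<Sum>b<r2. \<Sum>a<r1. v b * P a b * u a) = (\<Sum>a<r1. \<Sum>b<r2. u a * P a b * v b)"
      by (subst sum.swap, simp add: ac_simps)
    have e2: "(\<Sum>b<r2. v b * marg2 r1 P b * v b) = (\<Sum>a<r1. \<Sum>b<r2. P a b * (v b)^2)"
      unfolding marg2_def by (subst sum.swap, simp add: sum_distrib_left sum_distrib_right power2_eq_square ac_simps)
    have e3: "(\<Sum>a<r1. u a * marg1 r2 P a * u a) = (\<Sum>a<r1. \<Sum>b<r2. P a b * (u a)^2)"
      unfolding marg1_def by (simp add: sum_distrib_left sum_distrib_right power2_eq_square ac_simps)
    have e4: "(\<Sum>a<r1. \<Sum>b<r2. P a b * (u a + v b)^2) = (\<Sum>a<r1. \<Sum>b<r2. P a b * (u a)^2)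
       + 2 * (\<Sum>a<r1. \<Sum>b<r2. u a * P a b * v b) + (\<Sum>a<r1. \<Sum>b<r2. P a b * (v b)^2)"
    proof -
      have "(\<Sum>a<r1. \<Sum>b<r2. P a b * (u a + v b)^2) = (\<Sum>a<r1. \<Sum>b<r2. P a b * (u a)^2
        + 2 * (u a * P a b * v b) + P a b * (v b)^2)"
        by (intro sum.cong refl, simp add: power2_eq_square algebra_simps)
      thus ?thesis by (simp only: sum.distrib sum_distrib_left)
    qed
    show ?thesis unfolding sum.distrib e1 e2 e3 e4 by simp
  qed
  finally show ?thesis unfolding y_def A_def K_def .
qed

lemma quad_spec:
  fixes A U :: "real mat"
  assumes U: "U \<in> carrier_mat n n" and UU: "U * U\<^sup>T = 1\<^sub>m n"
    and AU: "A = U * mat_diag n (\<lambda>i. es!i) * U\<^sup>T" and y: "y \<in> carrier_vec n"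
  shows "y \<bullet> (A *\<^sub>v y) = (\<Sum>k<n. es!k * ((U\<^sup>T *\<^sub>v y)$k)^2)"
    and "(\<Sum>k<n. ((U\<^sup>T *\<^sub>v y)$k)^2) = y \<bullet> y"
proof -
  define c where "c = U\<^sup>T *\<^sub>v y"
  define D where "D = mat_diag n (\<lambda>i. es!i)"
  have c: "c \<in> carrier_vec n" unfolding c_def using U y by auto
  have D: "D \<in> carrier_mat n n" unfolding D_def by (auto simp: mat_diag_def)
  have "A *\<^sub>v y = U *\<^sub>v (D *\<^sub>v c)" unfolding AU c_def D_def[symmetric] using U D y
    by (simp add: assoc_mult_mat_vec[of _ n n _ n])
  hence "y \<bullet> (A *\<^sub>v y) = c \<bullet> (D *\<^sub>v c)"
    using sprod_mat_vec[OF U y, of "D *\<^sub>v c"] D c unfolding c_def by simp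
  also have "\<dots> = (\<Sum>k<n. es!k * (c$k)^2)" using c unfolding D_def
    by (simp add: scalar_prod_def lessThan_atLeast0 mat_diag_def power2_eq_square if_mult_zero_left
        if_mult_zero_right sum.delta sum.delta' ac_simps cong: if_cong)
  finally show "y \<bullet> (A *\<^sub>v y) = (\<Sum>k<n. es!k * ((U\<^sup>T *\<^sub>v y)$k)^2)" unfolding c_def .
  have "U *\<^sub>v c = (U * U\<^sup>T) *\<^sub>v y" unfolding c_def by (rule assoc_mult_mat_vec[symmetric], insert U y, auto)
  hence "U *\<^sub>v c = y" unfolding UU using y by simp
  hence "y \<bullet> y = c \<bullet> c" using sprod_mat_vec[OF U y c] unfolding c_def by simp
  also have "\<dots> = (\<Sum>k<n. (c$k)^2)" using c by (simp add: scalar_prod_def lessThan_atLeast0 power2_eq_square)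
  finally show "(\<Sum>k<n. ((U\<^sup>T *\<^sub>v y)$k)^2) = y \<bullet> y" unfolding c_def by simp
qed

lemma yv_carrier: "yv r1 r2 P u v \<in> carrier_vec (r1+r2)" unfolding yv_def by simp

lemma NN_lemma:
  assumes pos: "\<forall>t<r1. marg1 r2 P t > 0" "\<forall>t<r2. marg2 r1 P t > 0"
  shows "yv r1 r2 P u v \<bullet> yv r1 r2 P u v = (\<Sum>a<r1. marg1 r2 P a * (u a)^2) + (\<Sum>b<r2. marg2 r1 P b * (v b)^2)"
proof -
  have "yv r1 r2 P u v \<bullet> yv r1 r2 P u v = (\<Sum>i<r1+r2. dd r1 r2 P i * (wv r1 u v i)^2)"
    unfolding yv_def scalar_prod_def lessThan_atLeast0[symmetric]
  proof (rule sum.cong)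
    show "{..<dim_vec (vec (r1 + r2) (\<lambda>i. sqrt (dd r1 r2 P i) * wv r1 u v i))} = {..<r1 + r2}" by simp
    fix i assume "i \<in> {..<r1+r2}"
    hence "dd r1 r2 P i > 0" using dd_pos[OF pos] by auto
    hence "sqrt (dd r1 r2 P i) * sqrt (dd r1 r2 P i) = dd r1 r2 P i" by simp
    thus "vec (r1 + r2) (\<lambda>i. sqrt (dd r1 r2 P i) * wv r1 u v i) $ i *
         vec (r1 + r2) (\<lambda>i. sqrt (dd r1 r2 P i) * wv r1 u v i) $ i =
         dd r1 r2 P i * (wv r1 u v i)\<^sup>2" using \<open>i \<in> {..<r1+r2}\<close>
      by (simp add: power2_eq_square ac_simps)
  qed
  also have "\<dots> = (\<Sum>a<r1. marg1 r2 P a * (u a)^2) + (\<Sum>b<r2. marg2 r1 P b * (v b)^2)"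
    unfolding sum_split_add by (auto simp: dd_def wv_def)
  finally show ?thesis .
qed

lemma yv_all:
  assumes pos: "\<forall>t<r1. marg1 r2 P t > 0" "\<forall>t<r2. marg2 r1 P t > 0"
    and y: "y \<in> carrier_vec (r1+r2)"
  shows "y = yv r1 r2 P (\<lambda>a. y$a / sqrt (dd r1 r2 P a)) (\<lambda>b. y$(r1+b) / sqrt (dd r1 r2 P (r1+b)))"
proof (intro eq_vecI)
  fix i assume "i < dim_vec (yv r1 r2 P (\<lambda>a. y$a / sqrt (dd r1 r2 P a)) (\<lambda>b. y$(r1+b) / sqrt (dd r1 r2 P (r1+b))))"
  hence i: "i < r1 + r2" unfolding yv_def by simp
  hence "sqrt (dd r1 r2 P i) > 0" using dd_pos[OF pos] by auto
  thus "y $ i = yv r1 r2 P (\<lambda>a. y$a / sqrt (dd r1 r2 P a)) (\<lambda>b. y$(r1+b) / sqrt (dd r1 r2 P (r1+b))) $ i"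
    unfolding yv_def wv_def using i by auto
qed (insert y, auto simp: yv_def)

lemma yv_shift: "yv r1 r2 P (\<lambda>a. u a + t) (\<lambda>b. v b - t) = yv r1 r2 P u v + t \<cdot>\<^sub>v yv r1 r2 P (\<lambda>_. 1) (\<lambda>_. -1)"
  unfolding yv_def wv_def by (intro eq_vecI, auto simp: algebra_simps)



theorem mainTheorem2:
  fixes r1 r2 :: nat and P Q :: "nat \<Rightarrow> nat \<Rightarrow> real"
  assumes "is_pair_dist r1 r2 P" and "is_pair_dist r1 r2 Q"
    and "\<forall>t<r1. marg1 r2 P t > 0" and "\<forall>t<r2. marg2 r1 P t > 0"
  shows "tau r1 r2 P Q additive_class \<le>
    (let l2 = eig_lambda 2 (normalized (signless_laplacian r1 r2 P));
         M = Max ((\<lambda>t. marg1 r2 Q t / marg1 r2 P t) ` {..<r1}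
                \<union> (\<lambda>t. marg2 r1 Q t / marg2 r1 P t) ` {..<r2})
     in if l2 = 0 then \<infinity> else ereal (2 / l2 * M))"
proof -
  note pos = assms(3) assms(4)
  have Pnn: "\<And>a b. a<r1 \<Longrightarrow> b<r2 \<Longrightarrow> 0 \<le> P a b" and Psum: "(\<Sum>a<r1. \<Sum>b<r2. P a b) = 1"
    using assms(1) unfolding is_pair_dist_def by auto
  have Qnn: "\<And>a b. a<r1 \<Longrightarrow> b<r2 \<Longrightarrow> 0 \<le> Q a b"
    using assms(2) unfolding is_pair_dist_def by auto
  have r1: "r1 > 0" using Psum by (cases r1, auto)
  have r2: "r2 > 0" using Psum by (cases r2, auto)
  define n where "n = r1 + r2"
  define K where "K = signless_laplacian r1 r2 P"
  define A where "A = normalized K"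
  have K: "K \<in> carrier_mat n n" unfolding K_def n_def by (rule K_carrier)
  have A: "A \<in> carrier_mat n n" unfolding A_def using K by (rule normalized_carrier)
  have Ksym: "K $$ (i,j) = K $$ (j,i)" if "i < n" "j < n" for i j
    unfolding K_def using that unfolding n_def by (simp add: K_entry)
  have symA: "A\<^sup>T = A"
  proof (rule eq_matI)
    fix i j assume "i < dim_row A" "j < dim_col A"
    hence ij: "i < n" "j < n" using A by auto
    show "A\<^sup>T $$ (i,j) = A $$ (i,j)" using ij A unfolding A_def
      by (simp add: normalized_entry[OF K] Ksym[OF ij] mult.commute)
  qed (insert A, auto)
  from eigs_asc_spectral[OF A symA] obtain U where les: "length (eigs_asc A) = n" and sorted: "sorted (eigs_asc A)"
    and U: "U \<in> carrier_mat n n" and UTU: "U\<^sup>T * U = 1\<^sub>m n" and UUT: "U * U\<^sup>T = 1\<^sub>m n"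
    and AU: "A = U * mat_diag n (\<lambda>i. eigs_asc A ! i) * U\<^sup>T" by blast
  define es where "es = eigs_asc A"
  have l2: "eig_lambda 2 (normalized (signless_laplacian r1 r2 P)) = es ! 1"
    unfolding eig_lambda_def es_def A_def K_def by simp
  define EP where "EP u v = (\<Sum>a<r1. \<Sum>b<r2. P a b * (u a + v b)^2)" for u v
  have QF: "yv r1 r2 P u v \<bullet> (A *\<^sub>v yv r1 r2 P u v) = EP u v" for u v
    unfolding EP_def A_def K_def by (rule QF_lemma[OF pos])
  have yc: "yv r1 r2 P u v \<in> carrier_vec n" for u v unfolding n_def by (rule yv_carrier)
  have qf: "y \<bullet> (A *\<^sub>v y) = (\<Sum>k<n. es!k * ((U\<^sup>T *\<^sub>v y)$k)^2)" if "y \<in> carrier_vec n" for y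
    unfolding es_def by (rule quad_spec(1)[OF U UUT AU that])
  have cn: "(\<Sum>k<n. ((U\<^sup>T *\<^sub>v y)$k)^2) = y \<bullet> y" if "y \<in> carrier_vec n" for y
    by (rule quad_spec(2)[OF U UUT AU that])
  have EPnn: "EP u v \<ge> 0" for u v unfolding EP_def by (intro sum_nonneg mult_nonneg_nonneg, auto simp: Pnn)
  have psd: "y \<bullet> (A *\<^sub>v y) \<ge> 0" if y: "y \<in> carrier_vec n" for y
  proof -
    from yv_all[OF pos, of y] y obtain u v where "y = yv r1 r2 P u v" unfolding n_def by blast
    thus ?thesis using QF EPnn by simp
  qed
  have esnn: "es ! k \<ge> 0" if k: "k < n" for k
  proof -
    define y where "y = U *\<^sub>v unit_vec n k"
    have y: "y \<in> carrier_vec n" unfolding y_def using U by auto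
    have "U\<^sup>T *\<^sub>v y = (U\<^sup>T * U) *\<^sub>v unit_vec n k" unfolding y_def
      by (rule assoc_mult_mat_vec[symmetric], insert U, auto)
    hence c: "U\<^sup>T *\<^sub>v y = unit_vec n k" unfolding UTU by simp
    have "(\<Sum>j<n. es!j * ((unit_vec n k :: real vec)$j)^2) = (\<Sum>j<n. if j = k then es!k else 0)"
      using k by (intro sum.cong refl, auto simp: index_unit_vec)
    also have "\<dots> = es ! k" using k by simp
    finally show ?thesis using psd[OF y] qf[OF y] unfolding c by simp
  qed
  show ?thesis
  proof (cases "es ! 1 = 0")
    case True thus ?thesis unfolding Let_def l2 by simp
  next
    case False
    have n1: "1 < n" using r1 r2 unfolding n_def by simp
    with esnn[of 1] False have l2pos: "es ! 1 > 0" by simp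
    have esge: "es ! k \<ge> es ! 1" if "1 \<le> k" "k < n" for k
      using sorted_nth_mono[OF sorted that(1)] that les unfolding es_def by auto
    define l where "l = es ! 1"
    define M where "M = Max ((\<lambda>t. marg1 r2 Q t / marg1 r2 P t) ` {..<r1}
                \<union> (\<lambda>t. marg2 r1 Q t / marg2 r1 P t) ` {..<r2})"
    have Mge1: "marg1 r2 Q t / marg1 r2 P t \<le> M" if "t < r1" for t
      unfolding M_def by (rule Max_ge, insert that, auto)
    have Mge2: "marg2 r1 Q t / marg2 r1 P t \<le> M" if "t < r2" for t
      unfolding M_def by (rule Max_ge, insert that, auto)
    have Q1: "marg1 r2 Q t \<le> M * marg1 r2 P t" if "t < r1" for t
      using Mge1[OF that] pos(1) that by (simp add: pos_divide_le_eq)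
    have Q2: "marg2 r1 Q t \<le> M * marg2 r1 P t" if "t < r2" for t
      using Mge2[OF that] pos(2) that by (simp add: pos_divide_le_eq)
    have mQ1: "marg1 r2 Q t \<ge> 0" if "t < r1" for t unfolding marg1_def using Qnn that by (intro sum_nonneg, auto)
    have mQ2: "marg2 r1 Q t \<ge> 0" if "t < r2" for t unfolding marg2_def using Qnn that by (intro sum_nonneg, auto)
    have M0: "M \<ge> 0" using Mge1[OF r1] mQ1[OF r1] pos(1) r1
      by (meson divide_nonneg_pos order_trans)
    define z0 where "z0 = yv r1 r2 P (\<lambda>_. 1) (\<lambda>_. -1)"
    define c0 where "c0 = U\<^sup>T *\<^sub>v z0"
    have "EP (\<lambda>_. 1) (\<lambda>_. -1) = 0" unfolding EP_def by simp
    hence q0: "(\<Sum>k<n. es!k * (c0$k)^2) = 0" using QF[of "\<lambda>_. 1" "\<lambda>_. -1"] qf[OF yc[of "\<lambda>_. 1" "\<lambda>_. -1"]]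
      unfolding c0_def z0_def by simp
    have c0k: "c0 $ k = 0" if k: "1 \<le> k" "k < n" for k
    proof -
      have "\<forall>k\<in>{..<n}. es!k * (c0$k)^2 = 0"
        using q0 esnn by (subst sum_nonneg_eq_0_iff[symmetric], auto)
      hence "es!k * (c0$k)^2 = 0" using k by auto
      with esge[OF k] l2pos show ?thesis by simp
    qed
    have m1: "(\<Sum>a<r1. marg1 r2 P a) = 1" using Psum unfolding marg1_def .
    have m2: "(\<Sum>b<r2. marg2 r1 P b) = 1" using Psum unfolding marg2_def by (subst sum.swap)
    have "z0 \<bullet> z0 = 2" unfolding z0_def NN_lemma[OF pos] using m1 m2 by simp
    hence c0sum: "(\<Sum>k<n. (c0$k)^2) = 2" using cn[of z0] yc unfolding c0_def z0_def by simp
    have c00: "c0 $ 0 \<noteq> 0"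
    proof
      assume "c0 $ 0 = 0"
      hence "\<forall>k\<in>{..<n}. c0$k = 0" using c0k by (metis lessThan_iff less_one not_le)
      hence "(\<Sum>k<n. (c0$k)^2) = 0" by simp
      thus False using c0sum by simp
    qed
    define l where "l = es ! 1"
    have key: "\<exists>u' v'. (\<forall>a b. u' a + v' b = u a + v b) \<and>
       l * ((\<Sum>a<r1. marg1 r2 P a * (u' a)^2) + (\<Sum>b<r2. marg2 r1 P b * (v' b)^2)) \<le> EP u v" for u v
    proof -
      define c where "c = U\<^sup>T *\<^sub>v yv r1 r2 P u v"
      define t where "t = - (c$0) / (c0$0)"
      define u' where "u' a = u a + t" for a
      define v' where "v' b = v b - t" for b
      have UT: "U\<^sup>T \<in> carrier_mat n n" using U by auto
      have y': "yv r1 r2 P u' v' = yv r1 r2 P u v + t \<cdot>\<^sub>v z0"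
        unfolding u'_def v'_def z0_def by (rule yv_shift)
      have c': "U\<^sup>T *\<^sub>v yv r1 r2 P u' v' = c + t \<cdot>\<^sub>v c0" unfolding y' c_def c0_def z0_def
        using UT yc by (simp add: mult_add_distrib_mat_vec[OF UT] mult_mat_vec[OF UT])
      have cc: "c \<in> carrier_vec n" "c0 \<in> carrier_vec n" unfolding c_def c0_def z0_def using UT yc by auto
      have c'0: "(c + t \<cdot>\<^sub>v c0) $ 0 = 0" using cc n1 c00 unfolding t_def by simp
      have EPeq: "EP u' v' = EP u v" unfolding EP_def u'_def v'_def by simp
      have "l * ((\<Sum>a<r1. marg1 r2 P a * (u' a)^2) + (\<Sum>b<r2. marg2 r1 P b * (v' b)^2))
          = l * (\<Sum>k<n. ((c + t \<cdot>\<^sub>v c0)$k)^2)"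
        unfolding NN_lemma[OF pos, symmetric] cn[OF yc, symmetric] c' ..
      also have "\<dots> = (\<Sum>k<n. l * ((c + t \<cdot>\<^sub>v c0)$k)^2)" by (simp add: sum_distrib_left)
      also have "\<dots> \<le> (\<Sum>k<n. es!k * ((c + t \<cdot>\<^sub>v c0)$k)^2)"
      proof (rule sum_mono)
        fix k assume "k \<in> {..<n}"
        thus "l * ((c + t \<cdot>\<^sub>v c0)$k)^2 \<le> es!k * ((c + t \<cdot>\<^sub>v c0)$k)^2"
          using esge[of k] c'0 unfolding l_def
          by (cases "k = 0", simp, intro mult_right_mono, auto)
      qed
      also have "\<dots> = EP u v" unfolding c'[symmetric] qf[OF yc, symmetric] QF EPeq ..
      finally show ?thesis unfolding u'_def v'_def by (intro exI[of _ u'] exI[of _ v'], auto simp: u'_def v'_def)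
    qed
    have bound: "eratio (expect r1 r2 Q (\<lambda>a b. (fst fg a b - snd fg a b)^2))
             (expect r1 r2 P (\<lambda>a b. (fst fg a b - snd fg a b)^2)) \<le> ereal (2 / l * M)"
      if fg: "fg \<in> additive_class \<times> additive_class" for fg
    proof -
      from fg obtain f1 f2 g1 g2 where f: "fst fg = (\<lambda>a b. f1 a + f2 b)" and g: "snd fg = (\<lambda>a b. g1 a + g2 b)"
        unfolding additive_class_def by (cases fg, auto)
      define u where "u a = f1 a - g1 a" for a
      define v where "v b = f2 b - g2 b" for b
      have hfg: "fst fg a b - snd fg a b = u a + v b" for a b unfolding f g u_def v_def by simp
      define EQ where "EQ = expect r1 r2 Q (\<lambda>a b. (fst fg a b - snd fg a b)^2)"
      have EPfg: "expect r1 r2 P (\<lambda>a b. (fst fg a b - snd fg a b)^2) = EP u v"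
        unfolding expect_def EP_def hfg ..
      from key[of u v] obtain u' v' where uv: "\<And>a b. u' a + v' b = u a + v b"
        and lb: "l * ((\<Sum>a<r1. marg1 r2 P a * (u' a)^2) + (\<Sum>b<r2. marg2 r1 P b * (v' b)^2)) \<le> EP u v" by blast
      have "EQ = (\<Sum>a<r1. \<Sum>b<r2. Q a b * (u' a + v' b)^2)" unfolding EQ_def expect_def hfg uv ..
      also have "\<dots> \<le> (\<Sum>a<r1. \<Sum>b<r2. 2 * (Q a b * (u' a)^2) + 2 * (Q a b * (v' b)^2))"
      proof (intro sum_mono)
        fix a b assume "a \<in> {..<r1}" "b \<in> {..<r2}"
        hence q: "Q a b \<ge> 0" using Qnn by auto
        have "(u' a + v' b)^2 \<le> 2 * (u' a)^2 + 2 * (v' b)^2"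
          using zero_le_power2[of "u' a - v' b"] by (simp add: power2_eq_square algebra_simps)
        from mult_left_mono[OF this q]
        show "Q a b * (u' a + v' b)^2 \<le> 2 * (Q a b * (u' a)^2) + 2 * (Q a b * (v' b)^2)"
          by (simp add: algebra_simps)
      qed
      also have "\<dots> = 2 * (\<Sum>a<r1. marg1 r2 Q a * (u' a)^2) + 2 * (\<Sum>b<r2. marg2 r1 Q b * (v' b)^2)"
        unfolding marg1_def marg2_def
        by (simp add: sum.distrib sum_distrib_left sum_distrib_right, subst (2) sum.swap, simp)
      also have "\<dots> \<le> 2 * (\<Sum>a<r1. M * marg1 r2 P a * (u' a)^2) + 2 * (\<Sum>b<r2. M * marg2 r1 P b * (v' b)^2)"
        using Q1 Q2 by (intro add_mono mult_left_mono sum_mono mult_right_mono, auto)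
      also have "\<dots> = 2 * M * ((\<Sum>a<r1. marg1 r2 P a * (u' a)^2) + (\<Sum>b<r2. marg2 r1 P b * (v' b)^2))"
        by (simp add: sum_distrib_left algebra_simps)
      finally have EQle: "EQ \<le> 2 * M * ((\<Sum>a<r1. marg1 r2 P a * (u' a)^2) + (\<Sum>b<r2. marg2 r1 P b * (v' b)^2))" .
      have lpos: "l > 0" unfolding l_def by (rule l2pos)
      have "l * EQ \<le> 2 * M * (l * ((\<Sum>a<r1. marg1 r2 P a * (u' a)^2) + (\<Sum>b<r2. marg2 r1 P b * (v' b)^2)))"
        using mult_left_mono[OF EQle, of l] lpos by (simp add: algebra_simps)
      also have "\<dots> \<le> 2 * M * EP u v" using lb M0 by (intro mult_left_mono, auto)
      finally have main: "l * EQ \<le> 2 * M * EP u v" .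
      have EQnn: "EQ \<ge> 0" unfolding EQ_def expect_def using Qnn by (intro sum_nonneg mult_nonneg_nonneg, auto)
      show ?thesis
      proof (cases "EP u v = 0")
        case True
        hence "EQ = 0" using main EQnn lpos by (simp add: mult_le_0_iff) 
        thus ?thesis using True M0 lpos unfolding EPfg EQ_def[symmetric] eratio_def by simp
      next
        case False
        hence "EP u v > 0" using EPnn[of u v] by simp
        hence "EQ / EP u v \<le> 2 / l * M" using main lpos by (simp add: divide_le_eq field_simps)
        thus ?thesis using False unfolding EPfg EQ_def[symmetric] eratio_def by simp
      qed
    qed
    have "tau r1 r2 P Q additive_class \<le> ereal (2 / l * M)" unfolding tau_def
      by (rule SUP_least, rule bound)
    thus ?thesis using False unfolding Let_def l2 l_def M_def by simp
  qed
qed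


end
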